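(* Consider the scaled pure-scattering transport equation $$\frac{\partial I}{\partial t}+\frac{c}{\varepsilon}\vec\Omega\cdot\nabla I=\frac{c\sigma_s}{\varepsilon^2}(S-I),\qquad S(\vec\Omega)=\int_{S^2}p(\vec\Omega'\to\vec\Omega)I(\vec\Omega')\,d\vec\Omega',$$ with normalized phase function $p(\vec\Omega'\to\vec\Omega)=\sum_{l=0}^{L}C_l^\ast(\vec\Omega'\cdot\vec\Omega)^l$, $\int_{S^2}p\,d\vec\Omega'=1$, in the optically thick regime where $I=S-\varepsilon\sigma_s^{-1}\vec\Omega\cdot\nabla S+O(\varepsilon^2)$, so that to first order in $\varepsilon$ the angular moments satisfy $J^{(m)}=S^{(m)}$ for even $m$ and $J^{(n)}=S^{(n)}-\varepsilon\sigma_s^{-1}\nabla\cdot J^{(n+1)}$ for odd $n$. Here, for $(i_1,\dots,i_l)\in\{x,y,z\}^l$, $J^{(l)}_{i_1\cdots i_l}=\int\Omega_{i_1}\cdots\Omega_{i_l}I\,d\vec\Omega$ and $S^{(l)}_{i_1\cdots i_l}=\int\Omega_{i_1}\cdots\Omega_{i_l}S\,d\vec\Omega$ with $(\Omega_x,\Omega_y,\Omega_z)=(\mu,\xi,\zeta)$. Then for every odd $l$ and every tuple $(i_1,\dots,i_l)$, writing $\Omega^{(l)}_{i_1\cdots i_l}=\Omega_{i_1}\cdots\Omega_{i_l}$ and $\langle f\rangle=\int_{S^2}f\,d\vec\Omega$: (i) if the index $x$ occurs an odd number of times and $y,z$ each an even number of times, then $J^{(l)}_{i_1\cdots i_l}=\frac{\langle\mu\,\Omega^{(l)}_{i_1\cdots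 i_l}\rangle}{\langle\mu^2\rangle}J^{(1)}_x$; (ii) if $y$ occurs an odd number of times and $x,z$ each an even number of times, then $J^{(l)}_{i_1\cdots i_l}=\frac{\langle\xi\,\Omega^{(l)}_{i_1\cdots i_l}\rangle}{\langle\mu^2\rangle}J^{(1)}_y$; (iii) if $z$ occurs an odd number of times and $x,y$ each an even number of times, then $J^{(l)}_{i_1\cdots i_l}=\frac{\langle\zeta\,\Omega^{(l)}_{i_1\cdots i_l}\rangle}{\langle\mu^2\rangle}J^{(1)}_z$; (iv) if each of $x,y,z$ occurs an odd number of times, then $J^{(l)}_{i_1\cdots i_l}=0$.
   Context: $I(t,\vec x,\vec\Omega)$ is the radiation intensity, $c$ the speed of light, $\sigma_s$ the scattering coefficient, $\varepsilon$ the Knudsen number (ratio of mean free path to characteristic length), $\vec\Omega=(\mu,\xi,\zeta)$ a unit direction vector, and $d\vec\Omega$ surface measure on the unit sphere. The statements are understood to first order in $\varepsilon$ in the asymptotic expansion. *)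

theory Defs
  imports "HOL-Analysis.Analysis"
begin

text \<open>Unit direction vector in spherical coordinates (theta polar, phi azimuthal);
  components 1,2,3 are x,y,z, i.e. (mu, xi, zeta).\<close>
definition sph_dir :: "real \<Rightarrow> real \<Rightarrow> real^3" where
  "sph_dir \<theta> \<phi> = vector [sin \<theta> * cos \<phi>, sin \<theta> * sin \<phi>, cos \<theta>]"

definition sph_int :: "(real^3 \<Rightarrow> real) \<Rightarrow> real" where
  "sph_int f = integral ({0..pi} \<times> {0..2*pi}) (\<lambda>(\<theta>,\<phi>). f (sph_dir \<theta> \<phi>) * sin \<theta>)"

definition Omega_prod :: "3 list \<Rightarrow> real^3 \<Rightarrow> real" where
  "Omega_prod idx \<Omega> = prod_list (map (\<lambda>i. \<Omega> $ i) idx)"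

definition moment :: "3 list \<Rightarrow> (real^3 \<Rightarrow> real) \<Rightarrow> real" where
  "moment idx f = sph_int (\<lambda>\<Omega>. Omega_prod idx \<Omega> * f \<Omega>)"

definition phase :: "(nat \<Rightarrow> real) \<Rightarrow> nat \<Rightarrow> real^3 \<Rightarrow> real^3 \<Rightarrow> real" where
  "phase C L \<Omega>' \<Omega> = (\<Sum>l\<le>L. C l * (\<Omega>' \<bullet> \<Omega>) ^ l)"

definition source :: "(nat \<Rightarrow> real) \<Rightarrow> nat \<Rightarrow> (real^3 \<Rightarrow> real) \<Rightarrow> real^3 \<Rightarrow> real" where
  "source C L f \<Omega> = sph_int (\<lambda>\<Omega>'. phase C L \<Omega>' \<Omega> * f \<Omega>')"

end

theory Submission
  imports Defs "HOL-Computational_Algebra.Polynomial"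
begin


lemma sph_dir_comp[simp]:
  "sph_dir t p $ 1 = sin t * cos p" "sph_dir t p $ 2 = sin t * sin p" "sph_dir t p $ 3 = cos t"
  by (simp_all add: sph_dir_def)

lemma norm3: "norm (v::real^3) = sqrt (v$1^2 + v$2^2 + v$3^2)"
  by (simp add: norm_eq_sqrt_inner inner_vec_def sum_3 power2_eq_square)

lemma inner3: "(v::real^3) \<bullet> w = v$1*w$1 + v$2*w$2 + v$3*w$3"
  by (simp add: inner_vec_def sum_3)

lemma sph_dir_sphere: "sph_dir t p \<in> sphere 0 1"
proof -
  have "sin t^2 * (cos p^2 + sin p^2) + cos t^2 = 1" by simp
  then have "(sin t * cos p)^2 + (sin t * sin p)^2 + (cos t)^2 = 1"
    by (simp only: power_mult_distrib distrib_left)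
  then show ?thesis by (simp add: norm3)
qed

lemma vec3_eq: "(v::real^3) = w \<longleftrightarrow> v$1 = w$1 \<and> v$2 = w$2 \<and> v$3 = w$3"
  by (simp add: vec_eq_iff forall_3)

lemma sph_dir_axis: "sph_dir t p = (sin t * cos p) *\<^sub>R axis 1 1 + (sin t * sin p) *\<^sub>R axis 2 1 + cos t *\<^sub>R axis 3 1"
  by (simp add: vec3_eq axis_def)

lemma cont_sph_dir: "continuous_on S (\<lambda>x. sph_dir (fst x) (snd x))"
  unfolding sph_dir_axis by (auto intro!: continuous_intros)

lemma norm_sph_dir[simp]: "norm (sph_dir t p) = 1"
  using sph_dir_sphere by simp

definition Rect :: "(real*real) set" where "Rect = cbox (0,0) (pi, 2*pi)"
lemma R_eq: "{0..pi} \<times> {0..2*pi} = Rect" by (simp add: Rect_def cbox_Pair_eq)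

lemma sph_int_R: "sph_int f = integral Rect (\<lambda>x. f (sph_dir (fst x) (snd x)) * sin (fst x))"
  unfolding sph_int_def R_eq by (simp add: case_prod_beta')

lemma cont_R:
  assumes "continuous_on (sphere 0 1) f"
  shows "continuous_on S (\<lambda>x. f (sph_dir (fst x) (snd x)) * sin (fst x))"
proof -
  have "continuous_on S (f \<circ> (\<lambda>x. sph_dir (fst x) (snd x)))"
    by (rule continuous_on_compose[OF cont_sph_dir]) (rule continuous_on_subset[OF assms], auto simp: sph_dir_sphere)
  then show ?thesis by (auto simp: o_def intro!: continuous_intros)
qed

lemma int_R: "continuous_on (sphere 0 1) f \<Longrightarrow> (\<lambda>x. f (sph_dir (fst x) (snd x)) * sin (fst x)) integrable_on Rect"
  unfolding Rect_def by (rule integrable_continuous) (rule cont_R)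

lemma sph_int_add: "continuous_on (sphere 0 1) f \<Longrightarrow> continuous_on (sphere 0 1) g \<Longrightarrow>
  sph_int (\<lambda>x. f x + g x) = sph_int f + sph_int g"
  unfolding sph_int_R distrib_right by (rule integral_add[OF int_R int_R])

lemma sph_int_diff: "continuous_on (sphere 0 1) f \<Longrightarrow> continuous_on (sphere 0 1) g \<Longrightarrow>
  sph_int (\<lambda>x. f x - g x) = sph_int f - sph_int g"
  unfolding sph_int_R left_diff_distrib by (rule integral_diff[OF int_R int_R])

lemma sph_int_cmult: "sph_int (\<lambda>x. c * f x) = c * sph_int f"
  unfolding sph_int_R by (simp add: mult.assoc)

lemma sph_int_sum: "finite S \<Longrightarrow> (\<And>i. i \<in> S \<Longrightarrow> continuous_on (sphere 0 1) (f i)) \<Longrightarrow>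
  sph_int (\<lambda>x. \<Sum>i\<in>S. f i x) = (\<Sum>i\<in>S. sph_int (f i))"
  unfolding sph_int_R sum_distrib_right by (rule integral_sum) (auto intro: int_R)

lemma sph_int_cong: "(\<And>x. x \<in> sphere 0 1 \<Longrightarrow> f x = g x) \<Longrightarrow> sph_int f = sph_int g"
  unfolding sph_int_R by (simp add: sph_dir_sphere)




definition Pint :: "real \<Rightarrow> real \<Rightarrow> nat \<Rightarrow> nat \<Rightarrow> real" where
  "Pint s t n c = integral {s..t} (\<lambda>x. sin x ^ n * cos x ^ c)"

lemma int_sc: "(\<lambda>x::real. sin x ^ n * cos x ^ c) integrable_on {s..t}"
  by (rule integrable_continuous_interval) (intro continuous_intros)

lemma P_ftc:
  assumes st: "s \<le> t" and "sin s = 0" "sin t = 0"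
  shows "real (n+1) * Pint s t n (c+2) = real (c+1) * Pint s t (n+2) c"
proof -
  define g where "g (x::real) = sin x ^ (n+1) * cos x ^ (c+1)" for x
  define g' where "g' (x::real) = real (n+1) * (sin x ^ n * cos x ^ (c+2)) - real (c+1) * (sin x ^ (n+2) * cos x ^ c)" for x
  have d: "(g has_vector_derivative g' x) (at x within {s..t})" for x
  proof -
    have "(g has_real_derivative g' x) (at x)"
      unfolding g_def g'_def
      by (rule derivative_eq_intros refl | simp)+
    then show ?thesis
      using has_field_derivative_at_within has_real_derivative_iff_has_vector_derivative by blast
  qed
  have "(g' has_integral (g t - g s)) {s..t}"
    by (rule fundamental_theorem_of_calculus[OF st]) (use d in auto)
  moreover have "g t - g s = 0" using assms by (simp add: g_def)
  ultimately have "integral {s..t} g' = 0" by (simp add: integral_unique)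
  moreover have "integral {s..t} g' = real (n+1) * Pint s t n (c+2) - real (c+1) * Pint s t (n+2) c"
    unfolding g'_def Pint_def
    by (subst integral_diff; (intro integrable_continuous_interval continuous_intros)?) (simp only: integral_mult_right)
  ultimately show ?thesis by simp
qed

lemma P_split: "Pint s t n c = Pint s t (n+2) c + Pint s t n (c+2)"
proof -
  have "Pint s t (n+2) c + Pint s t n (c+2) = integral {s..t} (\<lambda>x. sin x ^ (n+2) * cos x ^ c + sin x ^ n * cos x ^ (c+2))"
    unfolding Pint_def by (rule integral_add[OF int_sc int_sc, symmetric])
  also have "\<dots> = Pint s t n c" unfolding Pint_def
  proof (rule integral_cong)
    fix x :: real
    have "sin x ^ (n+2) * cos x ^ c + sin x ^ n * cos x ^ (c+2) = sin x ^ n * cos x ^ c * (sin x ^ 2 + cos x ^ 2)"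
      by (simp only: power_add distrib_left) (simp only: mult_ac)
    then show "sin x ^ (n+2) * cos x ^ c + sin x ^ n * cos x ^ (c+2) = sin x ^ n * cos x ^ c"
      by (simp only: sin_cos_squared_add mult_1_right)
  qed
  finally show ?thesis by simp
qed

lemma P_rec_n:
  assumes "s \<le> t" "sin s = 0" "sin t = 0"
  shows "real (n+c+2) * Pint s t (n+2) c = real (n+1) * Pint s t n c"
  using P_ftc[OF assms, of n c] P_split[of s t n c] by (simp add: algebra_simps)

lemma P_rec_c:
  assumes "s \<le> t" "sin s = 0" "sin t = 0"
  shows "real (n+c+2) * Pint s t n (c+2) = real (c+1) * Pint s t n c"
  using P_ftc[OF assms, of n c] P_split[of s t n c] by (simp add: algebra_simps)




lemma ftc0:
  assumes "s \<le> t" "\<And>x. (g has_real_derivative g' x) (at x)" "g s = g t"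
  shows "integral {s..t} g' = 0"
proof -
  have "(g' has_integral (g t - g s)) {s..t}"
    by (rule fundamental_theorem_of_calculus[OF assms(1)])
       (use assms(2) has_field_derivative_at_within has_real_derivative_iff_has_vector_derivative in blast)
  then show ?thesis using assms(3) by (simp add: integral_unique)
qed

lemma P_c1: assumes "s \<le> t" "sin s = 0" "sin t = 0" shows "Pint s t n 1 = 0"
proof -
  have "integral {s..t} (\<lambda>x. real (n+1) * (sin x ^ n * cos x)) = 0"
    by (rule ftc0[OF assms(1), where g = "\<lambda>x. sin x ^ (n+1)"])
       (rule derivative_eq_intros refl | simp add: assms)+
  then show ?thesis unfolding Pint_def by (simp add: integral_mult_right del: of_nat_Suc)
qed

lemma P_n1: "Pint 0 (2*pi) 1 c = 0"
proof -
  have "integral {0..2*pi} (\<lambda>x. - real (c+1) * (sin x * cos x ^ c)) = 0"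
    by (rule ftc0[where g = "\<lambda>x. cos x ^ (c+1)"])
       (rule derivative_eq_intros refl | simp add: algebra_simps)+
  then show ?thesis unfolding Pint_def by (simp add: integral_mult_right del: of_nat_Suc)
qed

lemma P_odd_c: assumes "s \<le> t" "sin s = 0" "sin t = 0" "odd c" shows "Pint s t n c = 0"
proof -
  obtain k where k: "c = 2*k+1" using assms(4) oddE by blast
  have "Pint s t n (2*k+1) = 0"
  proof (induction k)
    case 0 then show ?case using P_c1[OF assms(1-3)] by simp
  next
    case (Suc k)
    have "real (n + (2*k+1) + 2) * Pint s t n (2*k+1+2) = real (2*k+1+1) * Pint s t n (2*k+1)"
      by (rule P_rec_c[OF assms(1-3)])
    then have "real (n + (2*k+1) + 2) * Pint s t n (2*k+1+2) = 0" using Suc by simp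
    then show ?case by (simp add: add.commute add.left_commute)
  qed
  then show ?thesis using k by simp
qed

lemma P_odd_n: assumes "odd n" shows "Pint 0 (2*pi) n c = 0"
proof -
  obtain k where k: "n = 2*k+1" using assms oddE by blast
  have "Pint 0 (2*pi) (2*k+1) c = 0"
  proof (induction k)
    case 0 then show ?case using P_n1 by simp
  next
    case (Suc k)
    have "real ((2*k+1) + c + 2) * Pint 0 (2*pi) (2*k+1+2) c = real (2*k+1+1) * Pint 0 (2*pi) (2*k+1) c"
      by (rule P_rec_n) auto
    then have "real ((2*k+1) + c + 2) * Pint 0 (2*pi) (2*k+1+2) c = 0" using Suc by simp
    then show ?case by (simp add: add.commute add.left_commute)
  qed
  then show ?thesis using k by simp
qed

definition mon3 :: "nat \<Rightarrow> nat \<Rightarrow> nat \<Rightarrow> real^3 \<Rightarrow> real" where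
  "mon3 a b c v = v$1^a * v$2^b * v$3^c"

definition Fm :: "nat \<Rightarrow> nat \<Rightarrow> nat \<Rightarrow> real" where "Fm a b c = sph_int (mon3 a b c)"

lemma cont_mono: "continuous_on S (mon3 a b c)"
  unfolding mon3_def by (intro continuous_intros)

lemma F_sep: "Fm a b c = Pint 0 (2*pi) b a * Pint 0 pi (a+b+1) c"
proof -
  have "Fm a b c = integral Rect (\<lambda>x. (sin (fst x) ^ (a+b+1) * cos (fst x) ^ c) * (sin (snd x) ^ b * cos (snd x) ^ a))"
    unfolding Fm_def sph_int_R
    by (rule integral_cong) (simp add: mon3_def power_mult_distrib power_add algebra_simps)
  also have "\<dots> = integral (cbox 0 pi) (\<lambda>u. integral (cbox 0 (2*pi)) (\<lambda>v. (sin u ^ (a+b+1) * cos u ^ c) * (sin v ^ b * cos v ^ a)))"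
    unfolding Rect_def by (subst integral_prod_continuous) (auto intro!: continuous_intros)
  also have "\<dots> = integral {0..pi} (\<lambda>u. (sin u ^ (a+b+1) * cos u ^ c) * Pint 0 (2*pi) b a)"
    by (simp add: integral_mult_right Pint_def)
  also have "\<dots> = Pint 0 (2*pi) b a * Pint 0 pi (a+b+1) c"
    by (simp add: integral_mult_left Pint_def)
  finally show ?thesis .
qed

lemma F_odd: "odd a \<or> odd b \<or> odd c \<Longrightarrow> Fm a b c = 0"
  unfolding F_sep using P_odd_n P_odd_c[of 0 "2*pi"] P_odd_c[of 0 pi] by auto

lemma F_R1: "real (a+b+c+3) * Fm (a+2) b c = real (a+1) * Fm a b c"
proof -
  have 1: "real (a+b+2) * Pint 0 (2*pi) b (a+2) = real (a+1) * Pint 0 (2*pi) b a"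
    using P_rec_c[of 0 "2*pi" b a] by (simp add: add.commute)
  have 2: "real (a+b+c+3) * Pint 0 pi (a+b+3) c = real (a+b+2) * Pint 0 pi (a+b+1) c"
  proof -
    have "real ((a+b+1)+c+2) * Pint 0 pi ((a+b+1)+2) c = real ((a+b+1)+1) * Pint 0 pi (a+b+1) c"
      by (rule P_rec_n) auto
    moreover have "(a+b+1)+c+2 = a+b+c+3" "(a+b+1)+2 = a+b+3" "(a+b+1)+1 = a+b+2" by simp_all
    ultimately show ?thesis by (simp only:)
  qed
  have h: "a+2+b+1 = a+b+3" by simp
  have e: "Fm (a+2) b c = Pint 0 (2*pi) b (a+2) * Pint 0 pi (a+b+3) c"
    by (subst F_sep) (simp only: h)
  have "real (a+b+2) * (real (a+b+c+3) * Fm (a+2) b c)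
      = (real (a+b+2) * Pint 0 (2*pi) b (a+2)) * (real (a+b+c+3) * Pint 0 pi (a+b+3) c)"
    unfolding e by (simp only: mult_ac)
  also have "\<dots> = (real (a+1) * Pint 0 (2*pi) b a) * (real (a+b+2) * Pint 0 pi (a+b+1) c)"
    unfolding 1 2 ..
  also have "\<dots> = real (a+b+2) * (real (a+1) * Fm a b c)"
    unfolding F_sep by (simp only: mult_ac)
  finally show ?thesis by simp
qed

lemma F_R2: "real (a+b+c+3) * Fm a b (c+2) = real (c+1) * Fm a b c"
proof -
  have 2: "real (a+b+c+3) * Pint 0 pi (a+b+1) (c+2) = real (c+1) * Pint 0 pi (a+b+1) c"
  proof -
    have "real ((a+b+1)+c+2) * Pint 0 pi (a+b+1) (c+2) = real (c+1) * Pint 0 pi (a+b+1) c"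
      by (rule P_rec_c) auto
    moreover have "(a+b+1)+c+2 = a+b+c+3" by simp
    ultimately show ?thesis by (simp only:)
  qed
  show ?thesis unfolding F_sep using 2 by (simp add: mult_ac)
qed

lemma F_R3: "real (a+b+c+3) * Fm a (b+2) c = real (b+1) * Fm a b c"
proof -
  have 1: "real (a+b+2) * Pint 0 (2*pi) (b+2) a = real (b+1) * Pint 0 (2*pi) b a"
    using P_rec_n[of 0 "2*pi" b a] by (simp add: add.commute)
  have 2: "real (a+b+c+3) * Pint 0 pi (a+b+3) c = real (a+b+2) * Pint 0 pi (a+b+1) c"
  proof -
    have "real ((a+b+1)+c+2) * Pint 0 pi ((a+b+1)+2) c = real ((a+b+1)+1) * Pint 0 pi (a+b+1) c"
      by (rule P_rec_n) auto
    moreover have "(a+b+1)+c+2 = a+b+c+3" "(a+b+1)+2 = a+b+3" "(a+b+1)+1 = a+b+2" by simp_all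
    ultimately show ?thesis by (simp only:)
  qed
  have h: "a+(b+2)+1 = a+b+3" by simp
  have e: "Fm a (b+2) c = Pint 0 (2*pi) (b+2) a * Pint 0 pi (a+b+3) c"
    by (subst F_sep) (simp only: h)
  have "real (a+b+2) * (real (a+b+c+3) * Fm a (b+2) c)
      = (real (a+b+2) * Pint 0 (2*pi) (b+2) a) * (real (a+b+c+3) * Pint 0 pi (a+b+3) c)"
    unfolding e by (simp only: mult_ac)
  also have "\<dots> = (real (b+1) * Pint 0 (2*pi) b a) * (real (a+b+2) * Pint 0 pi (a+b+1) c)"
    unfolding 1 2 ..
  also have "\<dots> = real (a+b+2) * (real (b+1) * Fm a b c)"
    unfolding F_sep by (simp only: mult_ac)
  finally show ?thesis by simp
qed

lemma F000: "Fm 0 0 0 = 4 * pi"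
proof -
  have a: "Pint 0 (2*pi) 0 0 = 2*pi" by (simp add: Pint_def)
  have "integral {0..pi} (\<lambda>x. sin x) = 2"
  proof -
    have "((\<lambda>x. sin x) has_integral ((- cos pi) - (- cos 0))) {0..pi}"
      by (rule fundamental_theorem_of_calculus) (auto intro!: derivative_eq_intros simp: has_real_derivative_iff_has_vector_derivative[symmetric])
    then show ?thesis by (simp add: integral_unique)
  qed
  then have b: "Pint 0 pi 1 0 = 2" by (simp add: Pint_def)
  show ?thesis unfolding F_sep using a b by simp
qed

lemma cancel_aux: "(x::real) * u = k * v \<Longrightarrow> x * w = k * v \<Longrightarrow> x \<noteq> 0 \<Longrightarrow> u = w"
  by (metis mult_left_cancel)

lemma F_sym: "Fm a b c = Fm a c b"
proof (induction "a+b+c" arbitrary: a b c rule: less_induct)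
  case less
  show ?case
  proof (cases "odd a \<or> odd b \<or> odd c")
    case True then show ?thesis using F_odd by auto
  next
    case False
    then have ev: "even a" "even b" "even c" by auto
    show ?thesis
    proof (cases "a \<ge> 2")
      case True
      then obtain a' where a: "a = a'+2" using le_Suc_ex by (metis add.commute)
      have IH: "Fm a' b c = Fm a' c b" by (rule less) (simp add: a)
      have x: "real (a'+b+c+3) * Fm (a'+2) b c = real (a'+1) * Fm a' b c" by (rule F_R1)
      have h: "a'+c+b+3 = a'+b+c+3" by simp
      have y: "real (a'+b+c+3) * Fm (a'+2) c b = real (a'+1) * Fm a' b c"
        using F_R1[of a' c b] h IH by (simp only:)
      have "Fm (a'+2) b c = Fm (a'+2) c b" by (rule cancel_aux[OF x y]) simp
      then show ?thesis using a by (simp only:)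
    next
      case False
      then have a0: "a = 0" using ev by presburger
      show ?thesis
      proof (cases "b \<ge> 2")
        case True
        then obtain b' where b: "b = b'+2" using le_Suc_ex by (metis add.commute)
        have IH: "Fm 0 b' c = Fm 0 c b'" by (rule less) (simp add: a0 b)
        have x: "real (0+b'+c+3) * Fm 0 (b'+2) c = real (b'+1) * Fm 0 b' c" by (rule F_R3)
        have h: "0+c+b'+3 = 0+b'+c+3" by simp
        have y: "real (0+b'+c+3) * Fm 0 c (b'+2) = real (b'+1) * Fm 0 b' c"
          using F_R2[of 0 c b'] h IH by (simp only:)
        have "Fm 0 (b'+2) c = Fm 0 c (b'+2)" by (rule cancel_aux[OF x y]) simp
        then show ?thesis using a0 b by (simp only:)
      next
        case False
        then have b0: "b = 0" using ev by presburger
        show ?thesis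
        proof (cases "c \<ge> 2")
          case True
          then obtain c' where c: "c = c'+2" using le_Suc_ex by (metis add.commute)
          have IH: "Fm 0 0 c' = Fm 0 c' 0" by (rule less) (simp add: a0 b0 c)
          have x: "real (0+0+c'+3) * Fm 0 0 (c'+2) = real (c'+1) * Fm 0 0 c'" by (rule F_R2)
          have h: "0+c'+0+3 = 0+0+c'+3" by simp
          have y: "real (0+0+c'+3) * Fm 0 (c'+2) 0 = real (c'+1) * Fm 0 0 c'"
            using F_R3[of 0 c' 0] h IH by (simp only:)
          have "Fm 0 0 (c'+2) = Fm 0 (c'+2) 0" by (rule cancel_aux[OF x y]) simp
          then show ?thesis using a0 b0 c by (simp only:)
        next
          case False
          then have "c = 0" using ev by presburger
          then show ?thesis using a0 b0 by simp
        qed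
      qed
    qed
  qed
qed




inductive pf :: "(real^3 \<Rightarrow> real) \<Rightarrow> bool" where
  pf_const: "pf (\<lambda>x. c)"
| pf_coord: "pf (\<lambda>x. x$i)"
| pf_add: "pf f \<Longrightarrow> pf g \<Longrightarrow> pf (\<lambda>x. f x + g x)"
| pf_mult: "pf f \<Longrightarrow> pf g \<Longrightarrow> pf (\<lambda>x. f x * g x)"

lemma pf_cont: "pf f \<Longrightarrow> continuous_on S f"
  by (induction rule: pf.induct) (auto intro!: continuous_intros)

lemma pf_comp: assumes "\<And>i. pf (\<lambda>x. G x $ i)" shows "pf f \<Longrightarrow> pf (\<lambda>x. f (G x))"
  by (induction rule: pf.induct) (auto intro: pf.intros assms)

lemma pf_sum: "finite S \<Longrightarrow> (\<And>i. i \<in> S \<Longrightarrow> pf (g i)) \<Longrightarrow> pf (\<lambda>x. \<Sum>i\<in>S. g i x)"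
  by (induction rule: finite_induct) (auto intro: pf.intros)

lemma pf_pow: "pf f \<Longrightarrow> pf (\<lambda>x. f x ^ n)"
  by (induction n) (auto intro: pf.intros)

lemma pf_inner: "pf (\<lambda>x. x \<bullet> v)"
  unfolding inner3 by (intro pf.intros)

lemma pf_phase: "pf (\<lambda>x. phase C L x v)"
  unfolding phase_def by (intro pf_sum pf.intros pf_pow pf_inner) auto

definition tm :: "real \<times> nat \<times> nat \<times> nat \<Rightarrow> real^3 \<Rightarrow> real" where
  "tm p x = fst p * mon3 (fst (snd p)) (fst (snd (snd p))) (snd (snd (snd p))) x"

definition tmul :: "real \<times> nat \<times> nat \<times> nat \<Rightarrow> real \<times> nat \<times> nat \<times> nat \<Rightarrow> real \<times> nat \<times> nat \<times> nat" where
  "tmul p q = (fst p * fst q, fst (snd p) + fst (snd q), fst (snd (snd p)) + fst (snd (snd q)), snd (snd (snd p)) + snd (snd (snd q)))"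

lemma tm_mul: "tm p x * tm q x = tm (tmul p q) x"
  by (simp add: tm_def tmul_def mon3_def power_add algebra_simps)

lemma sl_mult: "sum_list (map (\<lambda>p. tm p x) xs) * sum_list (map (\<lambda>p. tm p x) ys)
   = sum_list (map (\<lambda>p. tm p x) (concat (map (\<lambda>p. map (tmul p) ys) xs)))"
proof (induction xs)
  case Nil then show ?case by simp
next
  case (Cons p xs)
  have "tm p x * sum_list (map (\<lambda>q. tm q x) ys) = sum_list (map (\<lambda>q. tm (tmul p q) x) ys)"
    by (simp add: sum_list_const_mult[symmetric] tm_mul o_def)
  then show ?case using Cons by (simp add: distrib_right o_def)
qed

lemma pf_rep: "pf f \<Longrightarrow> \<exists>xs. \<forall>x. f x = sum_list (map (\<lambda>p. tm p x) xs)"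
proof (induction rule: pf.induct)
  case (pf_const c)
  show ?case by (rule exI[of _ "[(c,0,0,0)]"]) (simp add: tm_def mon3_def)
next
  case (pf_coord i)
  consider "i = 1" | "i = 2" | "i = 3" using exhaust_3 by blast
  then show ?case
  proof cases
    case 1 then show ?thesis by (intro exI[of _ "[(1,1,0,0)]"]) (simp add: tm_def mon3_def)
  next
    case 2 then show ?thesis by (intro exI[of _ "[(1,0,1,0)]"]) (simp add: tm_def mon3_def)
  next
    case 3 then show ?thesis by (intro exI[of _ "[(1,0,0,1)]"]) (simp add: tm_def mon3_def)
  qed
next
  case (pf_add f g)
  then obtain xs ys where "\<forall>x. f x = sum_list (map (\<lambda>p. tm p x) xs)" "\<forall>x. g x = sum_list (map (\<lambda>p. tm p x) ys)" by blast
  then show ?case by (intro exI[of _ "xs @ ys"]) simp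
next
  case (pf_mult f g)
  then obtain xs ys where "\<forall>x. f x = sum_list (map (\<lambda>p. tm p x) xs)" "\<forall>x. g x = sum_list (map (\<lambda>p. tm p x) ys)" by blast
  then show ?case by (intro exI[of _ "concat (map (\<lambda>p. map (tmul p) ys) xs)"]) (simp add: sl_mult)
qed

lemma cont_tm: "continuous_on S (tm p)"
  unfolding tm_def by (intro continuous_intros cont_mono)

lemma cont_sl: "continuous_on S (\<lambda>x. sum_list (map (\<lambda>p. tm p x) xs))"
  by (induction xs) (auto intro!: continuous_on_add cont_tm)

lemma sph_int_sl: "sph_int (\<lambda>x. sum_list (map (\<lambda>p. tm p x) xs)) = sum_list (map (\<lambda>p. fst p * Fm (fst (snd p)) (fst (snd (snd p))) (snd (snd (snd p)))) xs)"
proof (induction xs)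
  case Nil then show ?case by (simp add: sph_int_R)
next
  case (Cons p xs)
  have "sph_int (\<lambda>x. tm p x + sum_list (map (\<lambda>p. tm p x) xs)) = sph_int (tm p) + sph_int (\<lambda>x. sum_list (map (\<lambda>p. tm p x) xs))"
    by (rule sph_int_add) (auto intro: cont_tm cont_sl)
  moreover have "sph_int (tm p) = fst p * Fm (fst (snd p)) (fst (snd (snd p))) (snd (snd (snd p)))"
    unfolding tm_def Fm_def by (rule sph_int_cmult)
  ultimately show ?case using Cons by simp
qed

definition swap23 :: "real^3 \<Rightarrow> real^3" where "swap23 v = vector [v$1, v$3, v$2]"

lemma swap23_comp[simp]: "swap23 v $ 1 = v$1" "swap23 v $ 2 = v$3" "swap23 v $ 3 = v$2"
  by (simp_all add: swap23_def)

lemma pf_swap23: "pf (\<lambda>x. swap23 x $ i)"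
proof -
  consider "i = 1" | "i = 2" | "i = 3" using exhaust_3 by blast
  then show ?thesis by cases (auto intro: pf.intros)
qed

lemma swap23_inv: assumes "pf f" shows "sph_int (\<lambda>x. f (swap23 x)) = sph_int f"
proof -
  obtain xs where f: "\<And>x. f x = sum_list (map (\<lambda>p. tm p x) xs)" using pf_rep[OF assms] by blast
  define ys where "ys = map (\<lambda>p. (fst p, fst (snd p), snd (snd (snd p)), fst (snd (snd p)))) xs"
  have "\<And>x. f (swap23 x) = sum_list (map (\<lambda>p. tm p x) ys)"
    unfolding f ys_def by (simp add: o_def tm_def mon3_def mult_ac)
  then have "sph_int (\<lambda>x. f (swap23 x)) = sum_list (map (\<lambda>p. fst p * Fm (fst (snd p)) (fst (snd (snd p))) (snd (snd (snd p)))) ys)"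
    by (simp add: sph_int_sl)
  also have "\<dots> = sum_list (map (\<lambda>p. fst p * Fm (fst (snd p)) (fst (snd (snd p))) (snd (snd (snd p)))) xs)"
    unfolding ys_def by (simp add: o_def F_sym[symmetric])
  also have "\<dots> = sph_int f" unfolding f by (simp add: sph_int_sl)
  finally show ?thesis .
qed




lemma periodic_int:
  fixes h :: "real \<Rightarrow> real"
  assumes cont: "continuous_on UNIV h" and per: "\<And>x. h (x + 2*pi) = h x"
    and a: "0 \<le> a" "a \<le> 2*pi"
  shows "integral {0..2*pi} (\<lambda>x. h (x + a)) = integral {0..2*pi} h"
proof -
  have int: "h integrable_on {u..v}" for u v
    by (rule integrable_continuous_interval) (rule continuous_on_subset[OF cont], auto)
  have "integral {0..2*pi} (\<lambda>x. h (x + a)) = integral {a..2*pi+a} h"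
    using integral_shift_real_ivl[where a=a and b="2*pi+a" and c=a and f=h] by simp
  also have "\<dots> = integral {a..2*pi} h + integral {2*pi..2*pi+a} h"
    by (rule Henstock_Kurzweil_Integration.integral_combine[symmetric]) (use a int in auto)
  also have "integral {2*pi..2*pi+a} h = integral {0..a} (\<lambda>x. h (x + 2*pi))"
    using integral_shift_real_ivl[where a="2*pi" and b="2*pi+a" and c="2*pi" and f=h] by simp
  also have "\<dots> = integral {0..a} h" by (simp add: per)
  also have "integral {a..2*pi} h + integral {0..a} h = integral {0..2*pi} h"
    by (subst add.commute, rule Henstock_Kurzweil_Integration.integral_combine) (use a int in auto)
  finally show ?thesis .
qed

definition rotz :: "real \<Rightarrow> real^3 \<Rightarrow> real^3" where
  "rotz a v = vector [cos a * v$1 - sin a * v$2, sin a * v$1 + cos a * v$2, v$3]"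

lemma rotz_comp[simp]: "rotz a v $ 1 = cos a * v$1 - sin a * v$2" "rotz a v $ 2 = sin a * v$1 + cos a * v$2"
  "rotz a v $ 3 = v$3"
  by (simp_all add: rotz_def)

lemma rotz_sph: "rotz a (sph_dir t p) = sph_dir t (p + a)"
  by (simp add: vec3_eq cos_add sin_add algebra_simps)

lemma pf_diff: "pf f \<Longrightarrow> pf g \<Longrightarrow> pf (\<lambda>x. f x - g x)"
proof -
  assume "pf f" "pf g"
  then have "pf (\<lambda>x. f x + (-1) * g x)" by (intro pf.intros)
  then show ?thesis by simp
qed

lemma pf_rotz: "pf (\<lambda>x. rotz a x $ i)"
proof -
  consider "i = 1" | "i = 2" | "i = 3" using exhaust_3 by blast
  then show ?thesis by cases (auto intro!: pf.intros pf_diff)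
qed

lemma cont_sph_comp:
  fixes g h :: "'a::metric_space \<Rightarrow> real"
  assumes f: "continuous_on (sphere 0 1) f" and g: "continuous_on UNIV g" and h: "continuous_on UNIV h"
  shows "continuous_on S (\<lambda>x. f (sph_dir (g x) (h x)))"
proof -
  have "continuous_on UNIV (\<lambda>x. sph_dir (g x) (h x))"
    unfolding sph_dir_axis
    by (intro continuous_intros continuous_on_sin[OF g] continuous_on_cos[OF g] continuous_on_sin[OF h] continuous_on_cos[OF h])
  then have "continuous_on S (\<lambda>x. sph_dir (g x) (h x))" by (rule continuous_on_subset) auto
  then have "continuous_on S (f \<circ> (\<lambda>x. sph_dir (g x) (h x)))"
    by (rule continuous_on_compose) (rule continuous_on_subset[OF f], auto simp: sph_dir_sphere)
  then show ?thesis by (simp add: o_def)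
qed

lemma rotz_inv:
  assumes f: "continuous_on (sphere 0 1) f" and a: "0 \<le> a" "a \<le> 2*pi"
  shows "sph_int (\<lambda>x. f (rotz a x)) = sph_int f"
proof -
  have c1: "continuous_on S (\<lambda>x. f (sph_dir (fst x) (snd x + a)) * sin (fst x))" for S
    by (intro continuous_intros cont_sph_comp[OF f] | simp)+
  have c2: "continuous_on S (\<lambda>x. f (sph_dir (fst x) (snd x)) * sin (fst x))" for S
    by (intro continuous_intros cont_sph_comp[OF f] | simp)+
  have "sph_int (\<lambda>x. f (rotz a x)) = integral Rect (\<lambda>x. f (sph_dir (fst x) (snd x + a)) * sin (fst x))"
    unfolding sph_int_R rotz_sph ..
  also have "\<dots> = integral {0..pi} (\<lambda>t. integral {0..2*pi} (\<lambda>p. f (sph_dir t (p + a)) * sin t))"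
    unfolding Rect_def by (subst integral_prod_continuous[OF c1]) simp
  also have "\<dots> = integral {0..pi} (\<lambda>t. integral {0..2*pi} (\<lambda>p. f (sph_dir t p) * sin t))"
  proof (rule integral_cong)
    fix t
    show "integral {0..2*pi} (\<lambda>p. f (sph_dir t (p + a)) * sin t) = integral {0..2*pi} (\<lambda>p. f (sph_dir t p) * sin t)"
    proof (rule periodic_int[OF _ _ a, of "\<lambda>p. f (sph_dir t p) * sin t"])
      show "continuous_on UNIV (\<lambda>p. f (sph_dir t p) * sin t)"
        by (intro continuous_intros cont_sph_comp[OF f] | simp)+
      show "\<And>x. f (sph_dir t (x + 2 * pi)) * sin t = f (sph_dir t x) * sin t"
        by (simp add: sph_dir_def)
    qed
  qed
  also have "\<dots> = integral Rect (\<lambda>x. f (sph_dir (fst x) (snd x)) * sin (fst x))"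
    unfolding Rect_def by (subst integral_prod_continuous[OF c2]) simp
  also have "\<dots> = sph_int f" unfolding sph_int_R ..
  finally show ?thesis .
qed




definition InvS :: "(real^3 \<Rightarrow> real^3) \<Rightarrow> bool" where
  "InvS G \<longleftrightarrow> (\<forall>f. pf f \<longrightarrow> sph_int (\<lambda>x. f (G x)) = sph_int f)"

lemma Inv_swap: "InvS swap23"
  unfolding InvS_def using swap23_inv by blast

lemma Inv_rotz: "0 \<le> a \<Longrightarrow> a \<le> 2*pi \<Longrightarrow> InvS (rotz a)"
  unfolding InvS_def using rotz_inv pf_cont by blast

lemma Inv_comp: assumes "InvS G1" "InvS G2" "\<And>i. pf (\<lambda>x. G1 x $ i)" shows "InvS (\<lambda>x. G1 (G2 x))"
  unfolding InvS_def
proof safe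
  fix f assume f: "pf f"
  have "pf (\<lambda>x. f (G1 x))" by (rule pf_comp[OF assms(3) f])
  then have "sph_int (\<lambda>x. f (G1 (G2 x))) = sph_int (\<lambda>x. f (G1 x))"
    using assms(2) unfolding InvS_def by auto
  also have "\<dots> = sph_int f" using assms(1) f unfolding InvS_def by auto
  finally show "sph_int (\<lambda>x. f (G1 (G2 x))) = sph_int f" .
qed

lemma rotz_dot: "rotz a x \<bullet> rotz a y = x \<bullet> y"
proof -
  have "rotz a x \<bullet> rotz a y = (sin a ^ 2 + cos a ^ 2) * (x$1*y$1 + x$2*y$2) + x$3*y$3"
    by (simp only: inner3 rotz_comp) (simp only: power2_eq_square algebra_simps)
  also have "\<dots> = x \<bullet> y" by (simp only: sin_cos_squared_add mult_1_left inner3)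
  finally show ?thesis .
qed

lemma swap23_dot: "swap23 x \<bullet> swap23 y = x \<bullet> y"
  by (simp add: inner3)

lemma swap23_swap23: "swap23 (swap23 v) = v" by (simp add: vec3_eq)

lemma rotz_rotz: "rotz a (rotz b v) = rotz (a+b) v"
  by (simp add: vec3_eq cos_add sin_add algebra_simps)

lemma rotz_2pi: "rotz (2*pi) v = v" by (simp add: vec3_eq)

lemma pf_comp2: "(\<And>i. pf (\<lambda>x. G1 x $ i)) \<Longrightarrow> (\<And>i. pf (\<lambda>x. G2 x $ i)) \<Longrightarrow> pf (\<lambda>x. G1 (G2 x) $ (i::3))"
  by (rule pf_comp[where f = "\<lambda>x. G1 x $ i" and G = G2])

lemma sph_surj:
  assumes "v \<in> sphere (0::real^3) 1"
  obtains t p where "0 \<le> t" "t \<le> pi" "0 \<le> p" "p \<le> 2*pi" "v = sph_dir t p"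
proof -
  have n: "v$1^2 + v$2^2 + v$3^2 = 1" using assms by (simp add: norm3)
  have "0 \<le> v$1^2 + v$2^2" by simp
  then have "v$3^2 \<le> 1" using n by linarith
  then have "\<bar>v$3\<bar> \<le> 1" by (simp add: abs_square_le_1)
  then have z: "-1 \<le> v$3" "v$3 \<le> 1" by auto
  define t where "t = arccos (v$3)"
  have ct: "cos t = v$3" "0 \<le> t" "t \<le> pi" using z by (auto simp: t_def arccos_lbound arccos_ubound)
  have st: "sin t = sqrt (1 - v$3^2)" using z by (simp add: t_def sin_arccos)
  show ?thesis
  proof (cases "sin t = 0")
    case True
    then have "v$1^2 + v$2^2 = 0" using st n by simp
    then have "v$1 = 0" "v$2 = 0" by (auto simp: add_nonneg_eq_0_iff)
    then show ?thesis using that[of t 0] ct True by (simp add: vec3_eq)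
  next
    case False
    have "v$3^2 \<le> 1" using z by (simp add: abs_square_le_1)
    then have "sin t ^ 2 = 1 - v$3^2" using st by simp
    then have s2: "sin t ^ 2 = v$1^2 + v$2^2" using n by linarith
    have "(v$1 / sin t)^2 + (v$2 / sin t)^2 = (v$1^2 + v$2^2) / sin t ^ 2"
      by (simp add: power_divide add_divide_distrib)
    also have "\<dots> = 1" using s2[symmetric] False by simp
    finally have "(v$1 / sin t)^2 + (v$2 / sin t)^2 = 1" .
    then obtain p where p: "0 \<le> p" "p < 2*pi" "v$1 / sin t = cos p" "v$2 / sin t = sin p"
      using sincos_total_2pi by blast
    then have "v = sph_dir t p" using False ct by (simp add: vec3_eq field_simps)
    then show ?thesis using that[of t p] ct p by simp
  qed
qed




definition ez :: "real^3" where "ez = vector [0,0,1]"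
definition lam :: "(nat \<Rightarrow> real) \<Rightarrow> nat \<Rightarrow> real" where "lam C L = (\<Sum>l\<le>L. C l * Fm 0 0 (l+1))"

lemma ez_comp[simp]: "ez$1 = 0" "ez$2 = 0" "ez$3 = 1" by (simp_all add: ez_def)

lemma cont_cmono: "continuous_on S (\<lambda>x. k * mon3 a b c x)"
  by (intro continuous_intros cont_mono)

lemma sph_int_cmono: "sph_int (\<lambda>x. k * mon3 a b c x) = k * Fm a b c"
  unfolding Fm_def by (rule sph_int_cmult)

lemma Phi_ez: "sph_int (\<lambda>x. phase C L x ez * (x \<bullet> u)) = lam C L * u$3"
proof -
  have eq: "phase C L x ez * (x \<bullet> u) = (\<Sum>l\<le>L. ((C l * u$1) * mon3 1 0 l x + (C l * u$2) * mon3 0 1 l x) + (C l * u$3) * mon3 0 0 (l+1) x)" for x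
    by (simp add: phase_def inner3 mon3_def sum_distrib_left sum_distrib_right sum.distrib algebra_simps)
  have t: "sph_int (\<lambda>x. ((C l * u$1) * mon3 1 0 l x + (C l * u$2) * mon3 0 1 l x) + (C l * u$3) * mon3 0 0 (l+1) x) = (C l * u$3) * Fm 0 0 (l+1)" for l
  proof -
    have "sph_int (\<lambda>x. ((C l * u$1) * mon3 1 0 l x + (C l * u$2) * mon3 0 1 l x) + (C l * u$3) * mon3 0 0 (l+1) x)
      = sph_int (\<lambda>x. (C l * u$1) * mon3 1 0 l x + (C l * u$2) * mon3 0 1 l x) + sph_int (\<lambda>x. (C l * u$3) * mon3 0 0 (l+1) x)"
      by (rule sph_int_add) (intro continuous_intros cont_mono)+
    also have "sph_int (\<lambda>x. (C l * u$1) * mon3 1 0 l x + (C l * u$2) * mon3 0 1 l x)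
      = sph_int (\<lambda>x. (C l * u$1) * mon3 1 0 l x) + sph_int (\<lambda>x. (C l * u$2) * mon3 0 1 l x)"
      by (rule sph_int_add) (intro continuous_intros cont_mono)+
    finally show ?thesis by (simp add: sph_int_cmono F_odd)
  qed
  have "sph_int (\<lambda>x. phase C L x ez * (x \<bullet> u)) = sph_int (\<lambda>x. \<Sum>l\<le>L. ((C l * u$1) * mon3 1 0 l x + (C l * u$2) * mon3 0 1 l x) + (C l * u$3) * mon3 0 0 (l+1) x)"
    by (simp only: eq)
  also have "\<dots> = (\<Sum>l\<le>L. sph_int (\<lambda>x. ((C l * u$1) * mon3 1 0 l x + (C l * u$2) * mon3 0 1 l x) + (C l * u$3) * mon3 0 0 (l+1) x))"
    by (rule sph_int_sum) (auto intro!: continuous_intros cont_mono)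
  also have "\<dots> = (\<Sum>l\<le>L. (C l * u$3) * Fm 0 0 (l+1))" by (simp only: t)
  also have "\<dots> = lam C L * u$3" by (simp add: lam_def sum_distrib_left sum_distrib_right mult_ac)
  finally show ?thesis .
qed

lemma rotz_0: "rotz 0 v = v" by (simp add: vec3_eq)

lemma Phi:
  assumes om: "om \<in> sphere 0 1"
  shows "sph_int (\<lambda>x. phase C L x om * (x \<bullet> w)) = lam C L * (om \<bullet> w)"
proof -
  obtain t p where tp: "0 \<le> t" "t \<le> pi" "0 \<le> p" "p \<le> 2*pi" "om = sph_dir t p"
    using sph_surj[OF om] by blast
  define G where "G = (\<lambda>v. rotz p (swap23 (rotz (2*pi - t) (swap23 v))))"
  define H where "H = (\<lambda>v. swap23 (rotz t (swap23 (rotz (-p) v))))"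
  have InvG: "InvS G" unfolding G_def
    by (rule Inv_comp[OF Inv_rotz Inv_comp[OF Inv_swap Inv_comp[OF Inv_rotz Inv_swap pf_rotz] pf_swap23] pf_rotz])
       (use tp pi_ge_zero in auto)
  have Gdot: "G x \<bullet> G y = x \<bullet> y" for x y by (simp add: G_def rotz_dot swap23_dot)
  have Gez: "G ez = om" using tp by (simp add: G_def vec3_eq sin_diff cos_diff)
  have GH: "G (H v) = v" for v by (simp add: G_def H_def swap23_swap23 rotz_rotz rotz_2pi rotz_0)
  have ph: "phase C L (G x) (G y) = phase C L x y" for x y by (simp add: phase_def Gdot)
  have pff: "pf (\<lambda>x. phase C L x om * (x \<bullet> w))" by (intro pf.intros pf_phase pf_inner)
  have "sph_int (\<lambda>x. phase C L x om * (x \<bullet> w)) = sph_int (\<lambda>x. phase C L (G x) om * (G x \<bullet> w))"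
    using InvG pff unfolding InvS_def by auto
  also have "\<dots> = sph_int (\<lambda>x. phase C L x ez * (x \<bullet> H w))"
  proof -
    have "phase C L (G x) om * (G x \<bullet> w) = phase C L x ez * (x \<bullet> H w)" for x
      using ph[of x ez] Gdot[of x "H w"] by (simp add: Gez GH)
    then show ?thesis by simp
  qed
  also have "\<dots> = lam C L * (H w)$3" by (rule Phi_ez)
  also have "(H w)$3 = om \<bullet> w"
  proof -
    have "(H w)$3 = ez \<bullet> H w" by (simp add: inner3)
    also have "\<dots> = G ez \<bullet> G (H w)" by (simp add: Gdot)
    finally show ?thesis by (simp add: Gez GH)
  qed
  finally show ?thesis .
qed




lemma trig_contra:
  fixes a b c t0 q h :: real
  assumes t0: "0 < t0" "t0 + h < pi" and h: "0 < h" "h < pi"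
  and e1: "sin t0 * cos (q+h) * a + sin t0 * sin (q+h) * b + cos t0 * c = sin t0 * cos q * a + sin t0 * sin q * b + cos t0 * c"
  and e2: "sin t0 * cos (q-h) * a + sin t0 * sin (q-h) * b + cos t0 * c = sin t0 * cos q * a + sin t0 * sin q * b + cos t0 * c"
  and e3: "sin (t0+h) * cos q * a + sin (t0+h) * sin q * b + cos (t0+h) * c = sin t0 * cos q * a + sin t0 * sin q * b + cos t0 * c"
  shows "a = 0 \<and> b = 0 \<and> c = 0"
proof -
  have st: "sin t0 > 0" using t0 h by (intro sin_gt_zero) auto
  have sh: "sin h > 0" using h by (intro sin_gt_zero) auto
  have ch: "cos h < 1" using h cos_monotone_0_pi[of 0 h] by simp
  have E1: "cos (q+h) * a + sin (q+h) * b = cos q * a + sin q * b"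
  proof -
    have "sin t0 * (cos (q+h) * a + sin (q+h) * b) = sin t0 * (cos q * a + sin q * b)"
      using e1 by (simp add: algebra_simps)
    then show ?thesis using st by simp
  qed
  have E2: "cos (q-h) * a + sin (q-h) * b = cos q * a + sin q * b"
  proof -
    have "sin t0 * (cos (q-h) * a + sin (q-h) * b) = sin t0 * (cos q * a + sin q * b)"
      using e2 by (simp add: algebra_simps)
    then show ?thesis using st by simp
  qed
  define X where "X = a * cos q + b * sin q"
  define Y where "Y = b * cos q - a * sin q"
  have "2 * sin h * Y = 0"
  proof -
    have "cos (q+h) * a + sin (q+h) * b - (cos (q-h) * a + sin (q-h) * b) = 2 * sin h * Y"
      unfolding Y_def cos_add sin_add cos_diff sin_diff by (simp add: algebra_simps)
    then show ?thesis using E1 E2 by simp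
  qed
  then have Y0: "Y = 0" using sh by simp
  have "2 * (cos h - 1) * X = 0"
  proof -
    have "cos (q+h) * a + sin (q+h) * b + (cos (q-h) * a + sin (q-h) * b) - 2 * (cos q * a + sin q * b) = 2 * (cos h - 1) * X"
      unfolding X_def cos_add sin_add cos_diff sin_diff by (simp add: algebra_simps)
    then show ?thesis using E1 E2 by simp
  qed
  then have X0: "X = 0" using ch by simp
  have "X * cos q - Y * sin q = a * (sin q ^ 2 + cos q ^ 2)"
    unfolding X_def Y_def by (simp only: power2_eq_square algebra_simps)
  then have a0: "a = 0" using X0 Y0 by simp
  have "X * sin q + Y * cos q = b * (sin q ^ 2 + cos q ^ 2)"
    unfolding X_def Y_def by (simp only: power2_eq_square algebra_simps)
  then have b0: "b = 0" using X0 Y0 by simp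
  have "cos (t0 + h) * c = cos t0 * c" using e3 a0 b0 by simp
  moreover have "cos (t0 + h) < cos t0" using t0 h by (intro cos_monotone_0_pi) auto
  ultimately have "c = 0" by simp
  then show ?thesis using a0 b0 by simp
qed

lemma mem_box2: "(x::real\<times>real) \<in> box (a,b) (c,d) \<longleftrightarrow> a < fst x \<and> fst x < c \<and> b < snd x \<and> snd x < d"
  by (cases x) (auto simp: mem_box Basis_prod_def)

lemma ez_sphere: "ez \<in> sphere 0 1" by (simp add: norm3)

lemma cont_phase: "continuous_on S (\<lambda>x. phase C L x v)"
  by (rule pf_cont[OF pf_phase])

lemma maxp:
  assumes p_nonneg: "\<forall>\<Omega>\<in>sphere 0 1. \<forall>\<Omega>'\<in>sphere 0 1. phase C L \<Omega>' \<Omega> \<ge> 0"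
    and p_norm: "\<forall>\<Omega>\<in>sphere 0 1. sph_int (\<lambda>\<Omega>'. phase C L \<Omega>' \<Omega>) = 1"
    and f: "continuous_on (sphere 0 1) f"
    and fx: "\<forall>\<Omega>\<in>sphere 0 1. f \<Omega> = source C L f \<Omega>"
  shows "\<forall>y\<in>sphere 0 1. f y = f ez"
proof -
  obtain o0 where o0: "o0 \<in> sphere 0 1" and mx: "\<And>y. y \<in> sphere 0 1 \<Longrightarrow> f y \<le> f o0"
    using continuous_attains_sup[OF compact_sphere _ f] ez_sphere by blast
  define M where "M = f o0"
  define Q where "Q = (\<Sum>l\<le>L. monom (C l) l :: real poly)"
  have phQ: "phase C L x v = poly Q (x \<bullet> v)" for x v
    by (simp add: Q_def phase_def poly_sum poly_monom)
  have Qnz: "Q \<noteq> 0"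
  proof
    assume "Q = 0"
    then have "sph_int (\<lambda>x. phase C L x o0) = sph_int (\<lambda>x. 0)" by (simp add: phQ)
    then show False using p_norm o0 by (simp add: sph_int_R)
  qed
  have Zfin: "finite {t. poly Q t = 0}" by (rule poly_roots_finite[OF Qnz])
  define g where "g x = phase C L (sph_dir (fst x) (snd x)) o0 * (M - f (sph_dir (fst x) (snd x))) * sin (fst x)" for x
  have contg: "continuous_on S g" for S
  proof -
    have "continuous_on (sphere 0 1) (\<lambda>y. phase C L y o0 * (M - f y))"
      by (intro continuous_intros cont_phase f)
    from cont_R[OF this] show ?thesis unfolding g_def .
  qed
  have "sph_int (\<lambda>y. phase C L y o0 * (M - f y)) = sph_int (\<lambda>y. M * phase C L y o0 - phase C L y o0 * f y)"
    by (simp add: algebra_simps)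
  also have "\<dots> = M * sph_int (\<lambda>y. phase C L y o0) - sph_int (\<lambda>y. phase C L y o0 * f y)"
    by (subst sph_int_diff) (auto intro!: continuous_intros cont_phase f simp: sph_int_cmult)
  also have "\<dots> = 0" using p_norm o0 fx by (simp add: source_def M_def)
  finally have "integral Rect g = 0" unfolding g_def sph_int_R by simp
  moreover have "(pi/2, pi) \<in> box ((0::real),(0::real)) (pi, 2*pi)" by (simp add: mem_box2)
  then have "box ((0::real),(0::real)) (pi, 2*pi) \<noteq> {}" by blast
  moreover have "g x \<ge> 0" if "x \<in> Rect" for x
  proof -
    have "fst x \<in> {0..pi}" using that by (auto simp: Rect_def cbox_Pair_eq)
    then have "sin (fst x) \<ge> 0" by (simp add: sin_ge_zero)
    moreover have "phase C L (sph_dir (fst x) (snd x)) o0 \<ge> 0" using p_nonneg o0 sph_dir_sphere by blast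
    moreover have "M - f (sph_dir (fst x) (snd x)) \<ge> 0" using mx sph_dir_sphere M_def by fastforce
    ultimately show ?thesis unfolding g_def by simp
  qed
  ultimately have g0: "\<forall>x\<in>Rect. g x = 0"
    using integral_cbox_eq_0_iff[of "(0,0)" "(pi, 2*pi)" g] contg unfolding Rect_def by auto
  show ?thesis
  proof (rule ccontr)
    assume "\<not> ?thesis"
    then obtain y where y: "y \<in> sphere 0 1" and "f y \<noteq> M \<or> f ez \<noteq> M" using ez_sphere by metis
    then obtain y where y: "y \<in> sphere 0 1" and fy: "f y < M"
      using mx ez_sphere M_def by (metis order_less_le)
    obtain t1 p1 where tp1: "0 \<le> t1" "t1 \<le> pi" "0 \<le> p1" "p1 \<le> 2*pi" "y = sph_dir t1 p1"
      using sph_surj[OF y] by blast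
    define Fc where "Fc x = f (sph_dir (fst x) (snd x))" for x :: "real \<times> real"
    have cFc: "continuous_on UNIV Fc" unfolding Fc_def
      by (rule cont_sph_comp[OF f]) (auto intro: continuous_intros)
    have "open {x. Fc x < M}" by (rule open_Collect_less[OF cFc continuous_on_const])
    moreover have x1: "(t1,p1) \<in> {x. Fc x < M}" using fy tp1 by (simp add: Fc_def)
    ultimately obtain d where d: "d > 0" "ball (t1,p1) d \<subseteq> {x. Fc x < M}"
      by (meson openE)
    have bne: "box ((0::real),(0::real)) (pi, 2*pi) \<noteq> {}"
    proof -
      have "(pi/2, pi) \<in> box ((0::real),(0::real)) (pi, 2*pi)" by (simp add: mem_box2)
      then show ?thesis by blast
    qed
    have "(t1,p1) \<in> closure (box (0,0) (pi, 2*pi))"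
      using closure_box[OF bne] tp1 by (simp add: cbox_Pair_eq)
    then obtain x2 where x2: "x2 \<in> box (0,0) (pi, 2*pi)" "dist (t1,p1) x2 < d"
      using closure_approachableD d by blast
    have "open (ball (t1,p1) d \<inter> box (0,0) (pi, 2*pi))" by (intro open_Int open_ball open_box)
    moreover have "x2 \<in> ball (t1,p1) d \<inter> box (0,0) (pi, 2*pi)" using x2 by simp
    ultimately obtain r where r: "r > 0" "ball x2 r \<subseteq> ball (t1,p1) d \<inter> box (0,0) (pi, 2*pi)"
      by (meson openE)
    define T where "T x = sph_dir (fst x) (snd x) \<bullet> o0" for x :: "real \<times> real"
    have Tz: "poly Q (T x) = 0" if x: "x \<in> ball x2 r" for x
    proof -
      have xb: "x \<in> box (0,0) (pi, 2*pi)" and xF: "Fc x < M" using x r d by auto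
      then have "sin (fst x) > 0" by (intro sin_gt_zero) (auto simp: mem_box2)
      moreover have "x \<in> Rect" using xb box_subset_cbox unfolding Rect_def by blast
      then have "g x = 0" using g0 by blast
      ultimately have "phase C L (sph_dir (fst x) (snd x)) o0 = 0" using xF
        unfolding g_def Fc_def by simp
      then show ?thesis by (simp add: phQ T_def)
    qed
    have "finite (T ` ball x2 r)" by (rule finite_subset[OF _ Zfin]) (use Tz in auto)
    moreover have "continuous_on (ball x2 r) T" unfolding T_def
      by (intro continuous_intros cont_sph_dir)
    ultimately have "T constant_on ball x2 r"
      by (intro continuous_finite_range_constant) auto
    then obtain k where k: "\<And>x. x \<in> ball x2 r \<Longrightarrow> T x = k" unfolding constant_on_def by blast
    obtain t0 p0 where x2e: "x2 = (t0,p0)" by (cases x2)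
    define h where "h = min (r/2) 1"
    have h: "0 < h" "h < r" "h < pi" using r pi_gt3 by (auto simp: h_def)
    have b1: "(t0, p0+h) \<in> ball x2 r" "(t0, p0-h) \<in> ball x2 r" "(t0+h, p0) \<in> ball x2 r" "(t0,p0) \<in> ball x2 r"
      using h r by (auto simp: x2e dist_Pair_Pair dist_real_def)
    have "(t0+h, p0) \<in> box (0,0) (pi, 2*pi)" using b1 r by blast
    then have t0: "0 < t0" "t0 + h < pi" using x2 h by (auto simp: x2e mem_box2)
    have Te: "T (t,p) = sin t * cos p * o0$1 + sin t * sin p * o0$2 + cos t * o0$3" for t p
      by (simp add: T_def inner3)
    have "o0$1 = 0 \<and> o0$2 = 0 \<and> o0$3 = 0"
      by (rule trig_contra[OF t0 h(1) h(3), where q=p0]; simp only: Te[symmetric] k[OF b1(1)] k[OF b1(2)] k[OF b1(3)] k[OF b1(4)])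
    then show False using o0 by (simp add: norm3)
  qed
qed




lemma Omega_prod_mono: "Omega_prod idx v = mon3 (count_list idx 1) (count_list idx 2) (count_list idx 3) v"
proof (induction idx)
  case Nil then show ?case by (simp add: Omega_prod_def mon3_def)
next
  case (Cons i idx)
  have e: "Omega_prod (i # idx) v = v$i * Omega_prod idx v" by (simp add: Omega_prod_def)
  consider "i = 1" | "i = 2" | "i = 3" using exhaust_3 by blast
  then show ?case
  proof cases
    case 1 then show ?thesis using e Cons.IH by (simp add: mon3_def)
  next
    case 2 then show ?thesis using e Cons.IH by (simp add: mon3_def algebra_simps)
  next
    case 3 then show ?thesis using e Cons.IH by (simp add: mon3_def algebra_simps)
  qed
qed

lemma lin4: "sph_int (\<lambda>v. A * mon3 a b c v + B1 * mon3 (a+1) b c v + B2 * mon3 a (b+1) c v + B3 * mon3 a b (c+1) v)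
  = A * Fm a b c + B1 * Fm (a+1) b c + B2 * Fm a (b+1) c + B3 * Fm a b (c+1)"
proof -
  have c: "continuous_on (sphere 0 1) (\<lambda>v. k * mon3 i j l v)" for k i j l by (rule cont_cmono)
  have "sph_int (\<lambda>v. A * mon3 a b c v + B1 * mon3 (a+1) b c v + B2 * mon3 a (b+1) c v + B3 * mon3 a b (c+1) v)
    = sph_int (\<lambda>v. A * mon3 a b c v + B1 * mon3 (a+1) b c v + B2 * mon3 a (b+1) c v) + sph_int (\<lambda>v. B3 * mon3 a b (c+1) v)"
    by (rule sph_int_add) (intro continuous_intros cont_mono)+
  also have "sph_int (\<lambda>v. A * mon3 a b c v + B1 * mon3 (a+1) b c v + B2 * mon3 a (b+1) c v)
    = sph_int (\<lambda>v. A * mon3 a b c v + B1 * mon3 (a+1) b c v) + sph_int (\<lambda>v. B2 * mon3 a (b+1) c v)"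
    by (rule sph_int_add) (intro continuous_intros cont_mono)+
  also have "sph_int (\<lambda>v. A * mon3 a b c v + B1 * mon3 (a+1) b c v)
    = sph_int (\<lambda>v. A * mon3 a b c v) + sph_int (\<lambda>v. B1 * mon3 (a+1) b c v)"
    by (rule sph_int_add) (intro continuous_intros cont_mono)+
  finally show ?thesis by (simp only: sph_int_cmono)
qed

lemma lam_ne_1:
  assumes p_nonneg: "\<forall>\<Omega>\<in>sphere 0 1. \<forall>\<Omega>'\<in>sphere 0 1. phase C L \<Omega>' \<Omega> \<ge> 0"
    and p_norm: "\<forall>\<Omega>\<in>sphere 0 1. sph_int (\<lambda>\<Omega>'. phase C L \<Omega>' \<Omega>) = 1"
  shows "lam C L \<noteq> 1"
proof
  assume l1: "lam C L = 1"
  define w where "w v = v $ 3" for v :: "real^3"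
  have cw: "continuous_on (sphere 0 1) w" unfolding w_def by (intro continuous_intros)
  have "\<forall>v\<in>sphere 0 1. w v = source C L w v"
  proof
    fix v :: "real^3" assume v: "v \<in> sphere 0 1"
    have "source C L w v = sph_int (\<lambda>x. phase C L x v * (x \<bullet> ez))"
      unfolding source_def w_def by (simp add: inner3)
    also have "\<dots> = lam C L * (v \<bullet> ez)" by (rule Phi[OF v])
    finally show "w v = source C L w v" using l1 by (simp add: w_def inner3)
  qed
  then have "\<forall>y\<in>sphere 0 1. w y = w ez" using maxp[OF p_nonneg p_norm cw] by blast
  moreover have "- ez \<in> sphere 0 1" using ez_sphere by simp
  ultimately have "w (- ez) = w ez" by blast
  then show False by (simp add: w_def)
qed

theorem lemma3:
  fixes C :: "nat \<Rightarrow> real" and L :: nat and \<sigma>s :: real and \<epsilon> :: real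
    and I0 I1 :: "real^3 \<Rightarrow> real^3 \<Rightarrow> real"
    and x :: "real^3" and idx :: "3 list"
  assumes sigma_pos: "\<sigma>s > 0"
    and p_nonneg: "\<forall>\<Omega>\<in>sphere 0 1. \<forall>\<Omega>'\<in>sphere 0 1. phase C L \<Omega>' \<Omega> \<ge> 0"
    and p_norm: "\<forall>\<Omega>\<in>sphere 0 1. sph_int (\<lambda>\<Omega>'. phase C L \<Omega>' \<Omega>) = 1"
    and cont0: "\<forall>y. continuous_on (sphere 0 1) (I0 y)"
    and cont1: "\<forall>y. continuous_on (sphere 0 1) (I1 y)"
    and order0: "\<forall>y. \<forall>\<Omega>\<in>sphere 0 1. I0 y \<Omega> = source C L (I0 y) \<Omega>"
    and order1: "\<forall>y. \<forall>\<Omega>\<in>sphere 0 1. \<exists>D.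
                   ((\<lambda>z. source C L (I0 z) \<Omega>) has_derivative D) (at y) \<and>
                   I1 y \<Omega> = source C L (I1 y) \<Omega> - D \<Omega> / \<sigma>s"
    and l_odd: "odd (length idx)"
  defines "J \<equiv> \<lambda>js. moment js (\<lambda>\<Omega>. I0 x \<Omega> + \<epsilon> * I1 x \<Omega>)"
  shows
   "(odd (count_list idx 1) \<and> even (count_list idx 2) \<and> even (count_list idx 3) \<longrightarrow>
       J idx = sph_int (\<lambda>\<Omega>. \<Omega>$1 * Omega_prod idx \<Omega>) / sph_int (\<lambda>\<Omega>. (\<Omega>$1)^2) * J [1])
  \<and> (even (count_list idx 1) \<and> odd (count_list idx 2) \<and> even (count_list idx 3) \<longrightarrow>
       J idx = sph_int (\<lambda>\<Omega>. \<Omega>$2 * Omega_prod idx \<Omega>) / sph_int (\<lambda>\<Omega>. (\<Omega>$1)^2) * J [2])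
  \<and> (even (count_list idx 1) \<and> even (count_list idx 2) \<and> odd (count_list idx 3) \<longrightarrow>
       J idx = sph_int (\<lambda>\<Omega>. \<Omega>$3 * Omega_prod idx \<Omega>) / sph_int (\<lambda>\<Omega>. (\<Omega>$1)^2) * J [3])
  \<and> (odd (count_list idx 1) \<and> odd (count_list idx 2) \<and> odd (count_list idx 3) \<longrightarrow>
       J idx = 0)"
proof -
  define phi where "phi y = I0 y ez" for y
  have I0c: "I0 y v = phi y" if "v \<in> sphere 0 1" for y v
    using maxp[OF p_nonneg p_norm cont0[THEN spec] order0[THEN spec]] that unfolding phi_def by blast
  have src0: "source C L (I0 z) v = phi z" if v: "v \<in> sphere 0 1" for z v
  proof -
    have "source C L (I0 z) v = sph_int (\<lambda>x. phi z * phase C L x v)"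
      unfolding source_def by (rule sph_int_cong) (simp add: I0c)
    also have "\<dots> = phi z" using p_norm v by (simp add: sph_int_cmult)
    finally show ?thesis .
  qed
  obtain D0 where D0: "(phi has_derivative D0) (at x)"
    using order1 ez_sphere src0[OF ez_sphere] by (metis (no_types, lifting) ext)
  have I1eq: "I1 x v = source C L (I1 x) v - D0 v / \<sigma>s" if v: "v \<in> sphere 0 1" for v
  proof -
    obtain D where D: "((\<lambda>z. source C L (I0 z) v) has_derivative D) (at x)"
      and e: "I1 x v = source C L (I1 x) v - D v / \<sigma>s" using order1 v by blast
    have "(\<lambda>z. source C L (I0 z) v) = phi" using src0[OF v] by (rule ext)
    then have "D = D0" using D D0 has_derivative_unique by metis
    then show ?thesis using e by simp
  qed
  have lin: "linear D0" using D0 has_derivative_linear by blast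
  define b where "b = (vector [D0 (axis 1 1), D0 (axis 2 1), D0 (axis 3 1)] :: real^3)"
  have D0b: "D0 v = v \<bullet> b" for v
  proof -
    have "v = v$1 *\<^sub>R axis 1 1 + v$2 *\<^sub>R axis 2 1 + v$3 *\<^sub>R axis 3 1" by (simp add: vec3_eq axis_def)
    then have "D0 v = D0 (v$1 *\<^sub>R axis 1 1 + v$2 *\<^sub>R axis 2 1 + v$3 *\<^sub>R axis 3 1)" by simp
    also have "\<dots> = v$1 * D0 (axis 1 1) + v$2 * D0 (axis 2 1) + v$3 * D0 (axis 3 1)"
      using lin by (simp add: linear_add linear_scale)
    finally show ?thesis by (simp add: b_def inner3)
  qed
  define lm where "lm = lam C L"
  have lm1: "lm \<noteq> 1" unfolding lm_def by (rule lam_ne_1[OF p_nonneg p_norm])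
  define k where "k = - 1 / (\<sigma>s * (1 - lm))"
  define u' where "u' v = I1 x v - k * (v \<bullet> b)" for v
  have cu': "continuous_on (sphere 0 1) u'" unfolding u'_def
    by (intro continuous_intros cont1[rule_format])
  have fxu: "\<forall>v\<in>sphere 0 1. u' v = source C L u' v"
  proof
    fix v :: "real^3" assume v: "v \<in> sphere 0 1"
    have cA: "continuous_on (sphere 0 1) (\<lambda>y. phase C L y v * I1 x y)"
      by (intro continuous_intros cont_phase cont1[rule_format])
    have cB: "continuous_on (sphere 0 1) (\<lambda>y. k * (phase C L y v * (y \<bullet> b)))"
      by (intro continuous_intros cont_phase)
    have "source C L u' v = sph_int (\<lambda>y. phase C L y v * I1 x y - k * (phase C L y v * (y \<bullet> b)))"
      unfolding source_def u'_def by (simp add: algebra_simps)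
    also have "\<dots> = source C L (I1 x) v - k * (lm * (v \<bullet> b))"
      by (simp only: sph_int_diff[OF cA cB] sph_int_cmult Phi[OF v] source_def lm_def)
    finally have "source C L u' v = source C L (I1 x) v - k * (lm * (v \<bullet> b))" .
    moreover have "u' v = source C L (I1 x) v - (v \<bullet> b) / \<sigma>s - k * (v \<bullet> b)"
      unfolding u'_def using I1eq[OF v] D0b by simp
    moreover have "- (v \<bullet> b) / \<sigma>s - k * (v \<bullet> b) = - k * (lm * (v \<bullet> b))"
    proof -
      have "1 - lm \<noteq> 0" using lm1 by simp
      then show ?thesis using sigma_pos unfolding k_def by (simp add: field_simps)
    qed
    ultimately show "u' v = source C L u' v" by simp
  qed
  define a0 where "a0 = u' ez"
  have I1c: "I1 x v = a0 + k * (v \<bullet> b)" if "v \<in> sphere 0 1" for v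
    using maxp[OF p_nonneg p_norm cu' fxu] that unfolding a0_def u'_def by force
  define A where "A = phi x + \<epsilon> * a0"
  define B1 where "B1 = \<epsilon> * k * b$1"
  define B2 where "B2 = \<epsilon> * k * b$2"
  define B3 where "B3 = \<epsilon> * k * b$3"
  have Jf: "J js = A * Fm (count_list js 1) (count_list js 2) (count_list js 3)
      + B1 * Fm (count_list js 1 + 1) (count_list js 2) (count_list js 3)
      + B2 * Fm (count_list js 1) (count_list js 2 + 1) (count_list js 3)
      + B3 * Fm (count_list js 1) (count_list js 2) (count_list js 3 + 1)" for js
  proof -
    have "J js = sph_int (\<lambda>v. A * mon3 (count_list js 1) (count_list js 2) (count_list js 3) v
      + B1 * mon3 (count_list js 1 + 1) (count_list js 2) (count_list js 3) v
      + B2 * mon3 (count_list js 1) (count_list js 2 + 1) (count_list js 3) v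
      + B3 * mon3 (count_list js 1) (count_list js 2) (count_list js 3 + 1) v)"
      unfolding J_def moment_def
      by (rule sph_int_cong) (simp add: I0c I1c Omega_prod_mono A_def B1_def B2_def B3_def mon3_def inner3 algebra_simps)
    then show ?thesis by (simp only: lin4)
  qed
  have r1: "3 * Fm 2 0 0 = Fm 0 0 0" using F_R1[of 0 0 0] by (simp only: add_0_left of_nat_numeral of_nat_1 mult_1_left)
  have r2: "3 * Fm 0 0 2 = Fm 0 0 0" using F_R2[of 0 0 0] by (simp only: add_0_left of_nat_numeral of_nat_1 mult_1_left)
  have r3: "3 * Fm 0 2 0 = Fm 0 0 0" using F_R3[of 0 0 0] by (simp only: add_0_left of_nat_numeral of_nat_1 mult_1_left)
  have F200: "Fm 2 0 0 \<noteq> 0" using r1 F000 by auto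
  have F020: "Fm 0 2 0 = Fm 2 0 0" using r1 r3 by simp
  have F002: "Fm 0 0 2 = Fm 2 0 0" using r1 r2 by simp
  have den: "sph_int (\<lambda>\<Omega>. (\<Omega>$1)^2) = Fm 2 0 0" unfolding Fm_def by (rule sph_int_cong) (simp add: mon3_def)
  have n1: "sph_int (\<lambda>\<Omega>. \<Omega>$1 * Omega_prod idx \<Omega>) = Fm (count_list idx 1 + 1) (count_list idx 2) (count_list idx 3)"
    unfolding Fm_def by (rule sph_int_cong) (simp add: mon3_def Omega_prod_mono)
  have n2: "sph_int (\<lambda>\<Omega>. \<Omega>$2 * Omega_prod idx \<Omega>) = Fm (count_list idx 1) (count_list idx 2 + 1) (count_list idx 3)"
    unfolding Fm_def by (rule sph_int_cong) (simp add: mon3_def Omega_prod_mono)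
  have n3: "sph_int (\<lambda>\<Omega>. \<Omega>$3 * Omega_prod idx \<Omega>) = Fm (count_list idx 1) (count_list idx 2) (count_list idx 3 + 1)"
    unfolding Fm_def by (rule sph_int_cong) (simp add: mon3_def Omega_prod_mono)
  have J1: "J [1] = B1 * Fm 2 0 0" using Jf[of "[1]"] by (simp add: F_odd numeral_2_eq_2)
  have J2: "J [2] = B2 * Fm 2 0 0" using Jf[of "[2]"] F020 by (simp add: F_odd numeral_2_eq_2)
  have J3: "J [3] = B3 * Fm 2 0 0" using Jf[of "[3]"] F002 by (simp add: F_odd numeral_2_eq_2)
  show ?thesis
    unfolding n1 n2 n3 den J1 J2 J3 using F200 by (simp add: Jf F_odd)
qed



end
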